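(* Let $\Sigma=(+1,-1,-1,-1,-1)$. If $\delta=1$ then $\mathcal P_{\Sigma,\delta}H_5=\varnothing$. If $\delta=\omega$ or $\delta=\omega^2$ then $\mathcal P_{\Sigma,\delta}H_5\neq\varnothing$.
   Context: $V=\mathbb C^3$ with Hermitian form of signature $(-,+,+)$; the sign $\sigma p$ of a nonisotropic $p\in\mathbb PV$ is $-1$ if $\langle p,p\rangle<0$ and $+1$ if $\langle p,p\rangle>0$. $\mathrm{SU}(2,1)$ = determinant-one form-preserving maps, $\mathrm{PU}(2,1)=\mathrm{SU}(2,1)/\{1,\omega,\omega^2\}$, $\omega=e^{2\pi i/3}$. For nonisotropic $p$, $R^px=2\frac{\langle x,p\rangle}{\langle p,p\rangle}p-x$; $\mathrm{ta}(p,q)=\frac{\langle p,q\rangle\langle q,p\rangle}{\langle p,p\rangle\langle q,q\rangle}$. $H_5=\langle r_1,\dots,r_5\mid r_i^2=r_5\cdots r_1=1\rangle$. $\mathcal P_{\Sigma,\delta}H_5$ is the set of representations $\varrho:H_5\to\mathrm{PU}(2,1)$ with $\varrho(r_i)=R^{p_i}$ for nonisotropic $p_i$ such that $\mathrm{ta}(p_i,p_j)\neq0,1$ for $i\neq j$, $\sigma p_i=\sigma_i$, and $R^{p_5}\cdots R^{p_1}=\delta$ in $\mathrm{SU}(2,1)$. *)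

theory Defs
  imports "HOL-Analysis.Analysis"
begin

definition herm :: "complex^3 \<Rightarrow> complex^3 \<Rightarrow> complex" where
  "herm x y = - (x$1 * cnj (y$1)) + x$2 * cnj (y$2) + x$3 * cnj (y$3)"

text \<open>Points of PV are represented by nonzero vectors; all notions below are scale invariant.\<close>
definition nonisotropic :: "complex^3 \<Rightarrow> bool" where
  "nonisotropic p \<longleftrightarrow> herm p p \<noteq> 0"

definition sigma_pt :: "complex^3 \<Rightarrow> int" where
  "sigma_pt p = (if Re (herm p p) < 0 then -1 else 1)"

definition refl :: "complex^3 \<Rightarrow> complex^3 \<Rightarrow> complex^3" where
  "refl p x = (2 * herm x p / herm p p) *s p - x"

definition ta :: "complex^3 \<Rightarrow> complex^3 \<Rightarrow> complex" where
  "ta p q = (herm p q * herm q p) / (herm p p * herm q q)"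

definition omega :: complex where
  "omega = cis (2 * pi / 3)"

text \<open>P_{Sigma,delta} H_5: a representation of H_5 is recorded by the images
  rho i of the generators r_i (i = 1..5), each given by its canonical lift R^{p_i} to SU(2,1);
  the relations r_i^2 = 1 hold automatically, and r_5...r_1 = 1 holds in PU(2,1)
  because the product equals the scalar delta in SU(2,1).\<close>
definition PH5 :: "(nat \<Rightarrow> int) \<Rightarrow> complex \<Rightarrow> (nat \<Rightarrow> (complex^3 \<Rightarrow> complex^3)) set" where
  "PH5 Sig delta = {rho. \<exists>p :: nat \<Rightarrow> complex^3.
      (\<forall>i\<in>{1..5}. nonisotropic (p i) \<and> sigma_pt (p i) = Sig i \<and> rho i = refl (p i)) \<and>
      (\<forall>i. i \<notin> {1..5} \<longrightarrow> rho i = id) \<and>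
      (\<forall>i\<in>{1..5}. \<forall>j\<in>{1..5}. i \<noteq> j \<longrightarrow> ta (p i) (p j) \<noteq> 0 \<and> ta (p i) (p j) \<noteq> 1) \<and>
      refl (p 5) \<circ> refl (p 4) \<circ> refl (p 3) \<circ> refl (p 2) \<circ> refl (p 1) = (\<lambda>x. delta *s x)}"

end

theory Submission imports Defs begin
lemma omega_alt: "omega = Complex (-1/2) (sqrt 3 / 2)"
  unfolding omega_def cis.ctr using cos_120 sin_120 by simp

lemma omega_sq: "omega^2 = -1 - omega"
  unfolding omega_alt by (simp add: complex_eq_iff power2_eq_square)

lemma omega_cnj: "cnj omega = -1 - omega"
  unfolding omega_alt by (simp add: complex_eq_iff)

lemmas cnjs = complex_cnj_add complex_cnj_mult complex_cnj_diff complex_cnj_divide complex_cnj_numeral complex_cnj_minus complex_cnj_one complex_cnj_zero omega_cnj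

lemma herm_vec: "herm (vector [a1,a2,a3]) (vector [b1,b2,b3]) = - (a1 * cnj b1) + a2 * cnj b2 + a3 * cnj b3"
  by (simp add: herm_def)

lemma refl_step:
  assumes "herm p p = N" "N \<noteq> 0" "herm v p = h"
    "(2*h/N) * p$1 - v$1 = w$1" "(2*h/N) * p$2 - v$2 = w$2" "(2*h/N) * p$3 - v$3 = w$3"
  shows "refl p v = w"
  using assms unfolding refl_def by (simp add: vec_eq_iff forall_3)
lemma herm_add1: "herm (x + y) z = herm x z + herm y z"
  by (simp add: herm_def algebra_simps)
lemma herm_diff1: "herm (x - y) z = herm x z - herm y z"
  by (simp add: herm_def algebra_simps)
lemma herm_scale1: "herm (c *s x) z = c * herm x z"
  by (simp add: herm_def algebra_simps)
lemma herm_sym: "herm y x = cnj (herm x y)"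
  by (simp add: herm_def)
lemma herm_self_real: "herm x x = complex_of_real (Re (herm x x))"
  by (simp add: herm_def complex_eq_iff)
lemma herm_prod_sym: "herm x y * herm y x = complex_of_real ((cmod (herm x y))\<^sup>2)"
  by (metis herm_sym complex_norm_square)

definition kk :: "complex^3 \<Rightarrow> complex" where "kk p = 2 / herm p p"

lemma refl_k: "refl p x = (kk p * herm x p) *s p - x"
  by (simp add: refl_def kk_def)

lemma refl_invol: assumes "herm p p \<noteq> 0" shows "refl p (refl p x) = x"
proof -
  have "herm (refl p x) p = herm x p"
    using assms by (simp add: refl_def herm_diff1 herm_scale1)
  then show ?thesis by (simp add: refl_def)
qed

lemma refl_add: "refl p (x + y) = refl p x + refl p y"
  by (simp add: refl_k herm_add1 vec_eq_iff algebra_simps)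
lemma refl_scale: "refl p (c *s x) = c *s refl p x"
  by (simp add: refl_k herm_scale1 vec_eq_iff algebra_simps)

definition trc :: "(complex^3 \<Rightarrow> complex^3) \<Rightarrow> complex" where
  "trc f = (\<Sum>i\<in>UNIV. f (axis i 1) $ i)"

lemma trc_add: "trc (\<lambda>x. f x + g x) = trc f + trc g"
  by (simp add: trc_def sum.distrib)
lemma trc_diff: "trc (\<lambda>x. f x - g x) = trc f - trc g"
  by (simp add: trc_def sum_subtractf)
lemma trc_id: "trc (\<lambda>x. x) = 3"
  by (simp add: trc_def sum_3)
lemma trc_r1: "trc (\<lambda>x. (c * herm x q) *s p) = c * herm p q"
  by (simp add: trc_def sum_3 herm_def axis_def algebra_simps)

lemma refl2_expand:
  "refl b (refl a x) = (kk b * kk a * herm a b * herm x a) *s b - (kk b * herm x b) *s b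
      - (kk a * herm x a) *s a + x"
  by (simp add: refl_k herm_diff1 herm_scale1 vec_eq_iff algebra_simps)

lemma trc2: "trc (\<lambda>x. refl b (refl a x)) = kk b * kk a * herm a b * herm b a - kk b * herm b b - kk a * herm a a + 3"
  unfolding refl2_expand by (simp only: trc_add trc_diff trc_r1 trc_id)

lemma refl3_expand:
  "refl a (refl b (refl c x)) =
     (kk a * kk b * kk c * herm c b * herm b a * herm x c) *s a
   - (kk a * kk b * herm b a * herm x b) *s a
   - (kk a * kk c * herm c a * herm x c) *s a
   + (kk a * herm x a) *s a
   - (kk b * kk c * herm c b * herm x c) *s b
   + (kk b * herm x b) *s b
   + (kk c * herm x c) *s c - x"
  by (simp add: refl_k herm_diff1 herm_scale1 herm_add1 vec_eq_iff algebra_simps)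

lemma trc3: "trc (\<lambda>x. refl a (refl b (refl c x))) =
     kk a * kk b * kk c * herm c b * herm b a * herm a c
   - kk a * kk b * herm b a * herm a b
   - kk a * kk c * herm c a * herm a c
   + kk a * herm a a
   - kk b * kk c * herm c b * herm b c
   + kk b * herm b b
   + kk c * herm c c - 3"
  unfolding refl3_expand by (simp only: trc_add trc_diff trc_r1 trc_id)

definition det3 :: "complex^3 \<Rightarrow> complex^3 \<Rightarrow> complex^3 \<Rightarrow> complex" where
  "det3 a b c = a$1 * (b$2 * c$3 - b$3 * c$2) - a$2 * (b$1 * c$3 - b$3 * c$1) + a$3 * (b$1 * c$2 - b$2 * c$1)"

lemma gram: "herm a a * herm b b * herm c c + herm a b * herm b c * herm c a + herm a c * herm c b * herm b a
   - herm a a * herm b c * herm c b - herm b b * herm c a * herm a c - herm c c * herm a b * herm b a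
   = - (det3 a b c * cnj (det3 a b c))"
  unfolding herm_def det3_def by (simp only: cnjs) algebra

lemma kk_real: assumes "herm p p = complex_of_real A" shows "kk p = complex_of_real (2 / A)"
  using assms by (simp add: kk_def)

lemma no_delta1:
  assumes n1: "herm p1 p1 \<noteq> 0" and s1: "\<not> Re (herm p1 p1) < 0"
    and s2: "Re (herm p2 p2) < 0" and s3: "Re (herm p3 p3) < 0"
    and s4: "Re (herm p4 p4) < 0" and s5: "Re (herm p5 p5) < 0"
    and h12: "herm p1 p2 \<noteq> 0"
    and comp: "refl p5 \<circ> refl p4 \<circ> refl p3 \<circ> refl p2 \<circ> refl p1 = (\<lambda>x. 1 *s x)"
  shows False
proof -
  define A1 where "A1 = Re (herm p1 p1)"
  define A2 where "A2 = Re (herm p2 p2)"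
  define A3 where "A3 = Re (herm p3 p3)"
  define A4 where "A4 = Re (herm p4 p4)"
  define A5 where "A5 = Re (herm p5 p5)"
  have e1: "herm p1 p1 = complex_of_real A1" unfolding A1_def by (rule herm_self_real)
  have e2: "herm p2 p2 = complex_of_real A2" unfolding A2_def by (rule herm_self_real)
  have e3: "herm p3 p3 = complex_of_real A3" unfolding A3_def by (rule herm_self_real)
  have e4: "herm p4 p4 = complex_of_real A4" unfolding A4_def by (rule herm_self_real)
  have e5: "herm p5 p5 = complex_of_real A5" unfolding A5_def by (rule herm_self_real)
  have "A1 \<noteq> 0" using n1 e1 by auto
  then have A1p: "A1 > 0" using s1 unfolding A1_def by linarith
  have A2n: "A2 < 0" and A3n: "A3 < 0" and A4n: "A4 < 0" and A5n: "A5 < 0"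
    using s2 s3 s4 s5 by (simp_all add: A2_def A3_def A4_def A5_def)
  have nz3: "herm p3 p3 \<noteq> 0" and nz4: "herm p4 p4 \<noteq> 0" and nz5: "herm p5 p5 \<noteq> 0"
    using A3n A4n A5n e3 e4 e5 by auto
  have eq: "refl p2 (refl p1 x) = refl p3 (refl p4 (refl p5 x))" for x
  proof -
    let ?y = "refl p2 (refl p1 x)"
    have "refl p5 (refl p4 (refl p3 ?y)) = x" using fun_cong[OF comp, of x] by simp
    then have "refl p3 (refl p4 (refl p5 x)) = refl p3 (refl p4 (refl p5 (refl p5 (refl p4 (refl p3 ?y)))))"
      by simp
    also have "\<dots> = ?y" using nz3 nz4 nz5 by (simp add: refl_invol)
    finally show ?thesis by simp
  qed
  have treq: "trc (\<lambda>x. refl p2 (refl p1 x)) = trc (\<lambda>x. refl p3 (refl p4 (refl p5 x)))"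
    using eq by presburger
  define U12 where "U12 = (cmod (herm p1 p2))\<^sup>2"
  define U34 where "U34 = (cmod (herm p3 p4))\<^sup>2"
  define U35 where "U35 = (cmod (herm p3 p5))\<^sup>2"
  define U45 where "U45 = (cmod (herm p4 p5))\<^sup>2"
  have u12: "herm p1 p2 * herm p2 p1 = complex_of_real U12" unfolding U12_def by (rule herm_prod_sym)
  have u34: "herm p3 p4 * herm p4 p3 = complex_of_real U34" unfolding U34_def by (rule herm_prod_sym)
  have u35: "herm p3 p5 * herm p5 p3 = complex_of_real U35" unfolding U35_def by (rule herm_prod_sym)
  have u45: "herm p4 p5 * herm p5 p4 = complex_of_real U45" unfolding U45_def by (rule herm_prod_sym)
  have U12p: "U12 > 0" unfolding U12_def using h12 by simp
  define Z where "Z = herm p5 p4 * herm p4 p3 * herm p3 p5"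
  have lhs: "trc (\<lambda>x. refl p2 (refl p1 x)) = complex_of_real (4 * U12 / (A1 * A2) - 1)"
  proof -
    have "trc (\<lambda>x. refl p2 (refl p1 x)) = kk p2 * kk p1 * (herm p1 p2 * herm p2 p1) - kk p2 * herm p2 p2 - kk p1 * herm p1 p1 + 3"
      unfolding trc2 by (simp add: algebra_simps)
    also have "\<dots> = complex_of_real (4 * U12 / (A1 * A2) - 1)"
      unfolding u12 kk_real[OF e1] kk_real[OF e2] e1 e2 using A1p A2n
      by (simp add: field_simps) (simp add: of_real_def algebra_simps)?
    finally show ?thesis .
  qed
  have rhs: "trc (\<lambda>x. refl p3 (refl p4 (refl p5 x))) = complex_of_real (8 / (A3 * A4 * A5)) * Z
     + complex_of_real (3 - 4 * U34 / (A3 * A4) - 4 * U35 / (A3 * A5) - 4 * U45 / (A4 * A5))"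
  proof -
    have "trc (\<lambda>x. refl p3 (refl p4 (refl p5 x))) = kk p3 * kk p4 * kk p5 * Z
       - kk p3 * kk p4 * (herm p3 p4 * herm p4 p3) - kk p3 * kk p5 * (herm p3 p5 * herm p5 p3)
       + kk p3 * herm p3 p3 - kk p4 * kk p5 * (herm p4 p5 * herm p5 p4) + kk p4 * herm p4 p4 + kk p5 * herm p5 p5 - 3"
      unfolding trc3 Z_def by (simp add: algebra_simps)
    also have "\<dots> = complex_of_real (8 / (A3 * A4 * A5)) * Z
     + complex_of_real (3 - 4 * U34 / (A3 * A4) - 4 * U35 / (A3 * A5) - 4 * U45 / (A4 * A5))"
      unfolding u34 u35 u45 kk_real[OF e3] kk_real[OF e4] kk_real[OF e5] e3 e4 e5 using A3n A4n A5n
      by (simp add: field_simps)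
    finally show ?thesis .
  qed
  have gr: "A3 * A4 * A5 + 2 * Re Z - A3 * U45 - A4 * U35 - A5 * U34 \<le> 0"
  proof -
    have g: "herm p3 p3 * herm p4 p4 * herm p5 p5 + herm p3 p4 * herm p4 p5 * herm p5 p3 + herm p3 p5 * herm p5 p4 * herm p4 p3
      - herm p3 p3 * (herm p4 p5 * herm p5 p4) - herm p4 p4 * (herm p3 p5 * herm p5 p3) - herm p5 p5 * (herm p3 p4 * herm p4 p3)
      = - (det3 p3 p4 p5 * cnj (det3 p3 p4 p5))"
      using gram[of p3 p4 p5] by (simp add: algebra_simps)
    have c1: "herm p3 p4 * herm p4 p5 * herm p5 p3 = cnj Z"
      unfolding Z_def by (simp add: herm_sym[of p3 p4] herm_sym[of p4 p5] herm_sym[of p5 p3])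
    have c2: "herm p3 p5 * herm p5 p4 * herm p4 p3 = Z"
      unfolding Z_def by (simp add: algebra_simps)
    have sq: "0 \<le> Re (det3 p3 p4 p5) * Re (det3 p3 p4 p5) + Im (det3 p3 p4 p5) * Im (det3 p3 p4 p5)"
      by simp
    show ?thesis
      using arg_cong[OF g, of Re] unfolding c1 c2 e3 e4 e5 u34 u35 u45 by simp (use sq in linarith)
  qed
  have "Re (trc (\<lambda>x. refl p2 (refl p1 x))) < -1"
  proof -
    have "A1 * A2 < 0" using A1p A2n by (simp add: mult_pos_neg)
    then have "4 * U12 / (A1 * A2) < 0" using U12p by (simp add: divide_pos_neg)
    then show ?thesis unfolding lhs by simp
  qed
  moreover have "Re (trc (\<lambda>x. refl p3 (refl p4 (refl p5 x)))) \<ge> -1"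
  proof -
    have P: "A3 * A4 * A5 < 0" using A3n A4n A5n by (simp add: mult_pos_neg mult_neg_neg)
    have "Re (trc (\<lambda>x. refl p3 (refl p4 (refl p5 x)))) + 1
       = (8 * Re Z - 4 * (U34 * A5 + U35 * A4 + U45 * A3) + 4 * (A3 * A4 * A5)) / (A3 * A4 * A5)"
      unfolding rhs using A3n A4n A5n by (simp add: field_simps)
    also have "\<dots> \<ge> 0"
    proof (rule divide_nonpos_neg)
      show "8 * Re Z - 4 * (U34 * A5 + U35 * A4 + U45 * A3) + 4 * (A3 * A4 * A5) \<le> 0"
        using gr by (simp only: mult.commute[of U34] mult.commute[of U35] mult.commute[of U45]) (smt (verit))
    qed (rule P)
    finally show ?thesis by linarith
  qed
  ultimately show False using treq by simp
qed
definition a1 :: "complex^3" where "a1 = vector [((1) + (0) * omega), ((3) + (0) * omega), ((0) + (0) * omega)]"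

definition a2 :: "complex^3" where "a2 = vector [((1) + (0) * omega), ((0) + (0) * omega), ((0) + (0) * omega)]"

definition a3 :: "complex^3" where "a3 = vector [((7) + (0) * omega), ((-1) + (4) * omega), ((2) + (0) * omega)]"

definition a4 :: "complex^3" where "a4 = vector [((-13) + (199) * omega), ((-183) + (-87) * omega), ((-122) + (-64) * omega)]"

definition a5 :: "complex^3" where "a5 = vector [((-5) + (335) * omega), ((-303) + (-111) * omega), ((-202) + (-128) * omega)]"

lemma a1_n: "herm a1 a1 = (8)"
  unfolding a1_def herm_vec by (simp only: cnjs) ((simp add: field_simps; fail) | (use omega_sq in algebra) | algebra | (simp add: field_simps, use omega_sq in algebra))

lemma a2_n: "herm a2 a2 = (-1)"
  unfolding a2_def herm_vec by (simp only: cnjs) ((simp add: field_simps; fail) | (use omega_sq in algebra) | algebra | (simp add: field_simps, use omega_sq in algebra))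

lemma a3_n: "herm a3 a3 = (-24)"
  unfolding a3_def herm_vec by (simp only: cnjs) ((simp add: field_simps; fail) | (use omega_sq in algebra) | algebra | (simp add: field_simps, use omega_sq in algebra))

lemma a4_n: "herm a4 a4 = (-6048)"
  unfolding a4_def herm_vec by (simp only: cnjs) ((simp add: field_simps; fail) | (use omega_sq in algebra) | algebra | (simp add: field_simps, use omega_sq in algebra))

lemma a5_n: "herm a5 a5 = (-12096)"
  unfolding a5_def herm_vec by (simp only: cnjs) ((simp add: field_simps; fail) | (use omega_sq in algebra) | algebra | (simp add: field_simps, use omega_sq in algebra))

lemma a12_h: "herm a1 a2 = ((-1) + (0) * omega)"
  unfolding a1_def a2_def herm_vec by (simp only: cnjs) ((simp add: field_simps; fail) | (use omega_sq in algebra) | algebra | (simp add: field_simps, use omega_sq in algebra))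

lemma a13_h: "herm a1 a3 = ((-22) + (-12) * omega)"
  unfolding a1_def a3_def herm_vec by (simp only: cnjs) ((simp add: field_simps; fail) | (use omega_sq in algebra) | algebra | (simp add: field_simps, use omega_sq in algebra))

lemma a14_h: "herm a1 a4 = ((-76) + (460) * omega)"
  unfolding a1_def a4_def herm_vec by (simp only: cnjs) ((simp add: field_simps; fail) | (use omega_sq in algebra) | algebra | (simp add: field_simps, use omega_sq in algebra))

lemma a15_h: "herm a1 a5 = ((-236) + (668) * omega)"
  unfolding a1_def a5_def herm_vec by (simp only: cnjs) ((simp add: field_simps; fail) | (use omega_sq in algebra) | algebra | (simp add: field_simps, use omega_sq in algebra))

lemma a21_h: "herm a2 a1 = ((-1) + (0) * omega)"
  unfolding a2_def a1_def herm_vec by (simp only: cnjs) ((simp add: field_simps; fail) | (use omega_sq in algebra) | algebra | (simp add: field_simps, use omega_sq in algebra))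

lemma a23_h: "herm a2 a3 = ((-7) + (0) * omega)"
  unfolding a2_def a3_def herm_vec by (simp only: cnjs) ((simp add: field_simps; fail) | (use omega_sq in algebra) | algebra | (simp add: field_simps, use omega_sq in algebra))

lemma a24_h: "herm a2 a4 = ((212) + (199) * omega)"
  unfolding a2_def a4_def herm_vec by (simp only: cnjs) ((simp add: field_simps; fail) | (use omega_sq in algebra) | algebra | (simp add: field_simps, use omega_sq in algebra))

lemma a25_h: "herm a2 a5 = ((340) + (335) * omega)"
  unfolding a2_def a5_def herm_vec by (simp only: cnjs) ((simp add: field_simps; fail) | (use omega_sq in algebra) | algebra | (simp add: field_simps, use omega_sq in algebra))

lemma a31_h: "herm a3 a1 = ((-10) + (12) * omega)"
  unfolding a3_def a1_def herm_vec by (simp only: cnjs) ((simp add: field_simps; fail) | (use omega_sq in algebra) | algebra | (simp add: field_simps, use omega_sq in algebra))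

lemma a32_h: "herm a3 a2 = ((-7) + (0) * omega)"
  unfolding a3_def a2_def herm_vec by (simp only: cnjs) ((simp add: field_simps; fail) | (use omega_sq in algebra) | algebra | (simp add: field_simps, use omega_sq in algebra))

lemma a34_h: "herm a3 a4 = ((1116) + (702) * omega)"
  unfolding a3_def a4_def herm_vec by (simp only: cnjs) ((simp add: field_simps; fail) | (use omega_sq in algebra) | algebra | (simp add: field_simps, use omega_sq in algebra))

lemma a35_h: "herm a3 a5 = ((1980) + (1278) * omega)"
  unfolding a3_def a5_def herm_vec by (simp only: cnjs) ((simp add: field_simps; fail) | (use omega_sq in algebra) | algebra | (simp add: field_simps, use omega_sq in algebra))

lemma a41_h: "herm a4 a1 = ((-536) + (-460) * omega)"
  unfolding a4_def a1_def herm_vec by (simp only: cnjs) ((simp add: field_simps; fail) | (use omega_sq in algebra) | algebra | (simp add: field_simps, use omega_sq in algebra))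

lemma a42_h: "herm a4 a2 = ((13) + (-199) * omega)"
  unfolding a4_def a2_def herm_vec by (simp only: cnjs) ((simp add: field_simps; fail) | (use omega_sq in algebra) | algebra | (simp add: field_simps, use omega_sq in algebra))

lemma a43_h: "herm a4 a3 = ((414) + (-702) * omega)"
  unfolding a4_def a3_def herm_vec by (simp only: cnjs) ((simp add: field_simps; fail) | (use omega_sq in algebra) | algebra | (simp add: field_simps, use omega_sq in algebra))

lemma a45_h: "herm a4 a5 = ((-9072) + (0) * omega)"
  unfolding a4_def a5_def herm_vec by (simp only: cnjs) ((simp add: field_simps; fail) | (use omega_sq in algebra) | algebra | (simp add: field_simps, use omega_sq in algebra))

lemma a51_h: "herm a5 a1 = ((-904) + (-668) * omega)"
  unfolding a5_def a1_def herm_vec by (simp only: cnjs) ((simp add: field_simps; fail) | (use omega_sq in algebra) | algebra | (simp add: field_simps, use omega_sq in algebra))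

lemma a52_h: "herm a5 a2 = ((5) + (-335) * omega)"
  unfolding a5_def a2_def herm_vec by (simp only: cnjs) ((simp add: field_simps; fail) | (use omega_sq in algebra) | algebra | (simp add: field_simps, use omega_sq in algebra))

lemma a53_h: "herm a5 a3 = ((702) + (-1278) * omega)"
  unfolding a5_def a3_def herm_vec by (simp only: cnjs) ((simp add: field_simps; fail) | (use omega_sq in algebra) | algebra | (simp add: field_simps, use omega_sq in algebra))

lemma a54_h: "herm a5 a4 = ((-9072) + (0) * omega)"
  unfolding a5_def a4_def herm_vec by (simp only: cnjs) ((simp add: field_simps; fail) | (use omega_sq in algebra) | algebra | (simp add: field_simps, use omega_sq in algebra))

lemma a12_t: "ta a1 a2 = (-1/8)"
  unfolding ta_def a12_h a21_h a1_n a2_n by ((simp add: field_simps; fail) | (use omega_sq in algebra) | algebra | (simp add: field_simps, use omega_sq in algebra))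

lemma a13_t: "ta a1 a3 = (-91/48)"
  unfolding ta_def a13_h a31_h a1_n a3_n by ((simp add: field_simps; fail) | (use omega_sq in algebra) | algebra | (simp add: field_simps, use omega_sq in algebra))

lemma a14_t: "ta a1 a4 = (-751/144)"
  unfolding ta_def a14_h a41_h a1_n a4_n by ((simp add: field_simps; fail) | (use omega_sq in algebra) | algebra | (simp add: field_simps, use omega_sq in algebra))

lemma a15_t: "ta a1 a5 = (-1963/288)"
  unfolding ta_def a15_h a51_h a1_n a5_n by ((simp add: field_simps; fail) | (use omega_sq in algebra) | algebra | (simp add: field_simps, use omega_sq in algebra))

lemma a21_t: "ta a2 a1 = (-1/8)"
  unfolding ta_def a21_h a12_h a2_n a1_n by ((simp add: field_simps; fail) | (use omega_sq in algebra) | algebra | (simp add: field_simps, use omega_sq in algebra))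

lemma a23_t: "ta a2 a3 = (49/24)"
  unfolding ta_def a23_h a32_h a2_n a3_n by ((simp add: field_simps; fail) | (use omega_sq in algebra) | algebra | (simp add: field_simps, use omega_sq in algebra))

lemma a24_t: "ta a2 a4 = (2017/288)"
  unfolding ta_def a24_h a42_h a2_n a4_n by ((simp add: field_simps; fail) | (use omega_sq in algebra) | algebra | (simp add: field_simps, use omega_sq in algebra))

lemma a25_t: "ta a2 a5 = (5425/576)"
  unfolding ta_def a25_h a52_h a2_n a5_n by ((simp add: field_simps; fail) | (use omega_sq in algebra) | algebra | (simp add: field_simps, use omega_sq in algebra))

lemma a31_t: "ta a3 a1 = (-91/48)"
  unfolding ta_def a31_h a13_h a3_n a1_n by ((simp add: field_simps; fail) | (use omega_sq in algebra) | algebra | (simp add: field_simps, use omega_sq in algebra))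

lemma a32_t: "ta a3 a2 = (49/24)"
  unfolding ta_def a32_h a23_h a3_n a2_n by ((simp add: field_simps; fail) | (use omega_sq in algebra) | algebra | (simp add: field_simps, use omega_sq in algebra))

lemma a34_t: "ta a3 a4 = (421/64)"
  unfolding ta_def a34_h a43_h a3_n a4_n by ((simp add: field_simps; fail) | (use omega_sq in algebra) | algebra | (simp add: field_simps, use omega_sq in algebra))

lemma a35_t: "ta a3 a5 = (1333/128)"
  unfolding ta_def a35_h a53_h a3_n a5_n by ((simp add: field_simps; fail) | (use omega_sq in algebra) | algebra | (simp add: field_simps, use omega_sq in algebra))

lemma a41_t: "ta a4 a1 = (-751/144)"
  unfolding ta_def a41_h a14_h a4_n a1_n by ((simp add: field_simps; fail) | (use omega_sq in algebra) | algebra | (simp add: field_simps, use omega_sq in algebra))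

lemma a42_t: "ta a4 a2 = (2017/288)"
  unfolding ta_def a42_h a24_h a4_n a2_n by ((simp add: field_simps; fail) | (use omega_sq in algebra) | algebra | (simp add: field_simps, use omega_sq in algebra))

lemma a43_t: "ta a4 a3 = (421/64)"
  unfolding ta_def a43_h a34_h a4_n a3_n by ((simp add: field_simps; fail) | (use omega_sq in algebra) | algebra | (simp add: field_simps, use omega_sq in algebra))

lemma a45_t: "ta a4 a5 = (9/8)"
  unfolding ta_def a45_h a54_h a4_n a5_n by ((simp add: field_simps; fail) | (use omega_sq in algebra) | algebra | (simp add: field_simps, use omega_sq in algebra))

lemma a51_t: "ta a5 a1 = (-1963/288)"
  unfolding ta_def a51_h a15_h a5_n a1_n by ((simp add: field_simps; fail) | (use omega_sq in algebra) | algebra | (simp add: field_simps, use omega_sq in algebra))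

lemma a52_t: "ta a5 a2 = (5425/576)"
  unfolding ta_def a52_h a25_h a5_n a2_n by ((simp add: field_simps; fail) | (use omega_sq in algebra) | algebra | (simp add: field_simps, use omega_sq in algebra))

lemma a53_t: "ta a5 a3 = (1333/128)"
  unfolding ta_def a53_h a35_h a5_n a3_n by ((simp add: field_simps; fail) | (use omega_sq in algebra) | algebra | (simp add: field_simps, use omega_sq in algebra))

lemma a54_t: "ta a5 a4 = (9/8)"
  unfolding ta_def a54_h a45_h a5_n a4_n by ((simp add: field_simps; fail) | (use omega_sq in algebra) | algebra | (simp add: field_simps, use omega_sq in algebra))

lemma a_s11: "refl a1 (vector [1, 0, 0]) = vector [((-5/4) + (0) * omega), ((-3/4) + (0) * omega), ((0) + (0) * omega)]"
  apply (rule refl_step[OF a1_n, where h="((-1) + (0) * omega)"])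
  apply simp
  apply (simp_all only: a1_def herm_vec vector_3 cnjs)
  apply ((simp add: field_simps; fail) | (use omega_sq in algebra) | algebra | (simp add: field_simps, use omega_sq in algebra))+
  done

lemma a_s12: "refl a2 (vector [((-5/4) + (0) * omega), ((-3/4) + (0) * omega), ((0) + (0) * omega)]) = vector [((-5/4) + (0) * omega), ((3/4) + (0) * omega), ((0) + (0) * omega)]"
  apply (rule refl_step[OF a2_n, where h="((5/4) + (0) * omega)"])
  apply simp
  apply (simp_all only: a2_def herm_vec vector_3 cnjs)
  apply ((simp add: field_simps; fail) | (use omega_sq in algebra) | algebra | (simp add: field_simps, use omega_sq in algebra))+
  done

lemma a_s13: "refl a3 (vector [((-5/4) + (0) * omega), ((3/4) + (0) * omega), ((0) + (0) * omega)]) = vector [((-5/3) + (7/4) * omega), ((-4/3) + (-35/12) * omega), ((-5/6) + (1/2) * omega)]"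
  apply (rule refl_step[OF a3_n, where h="((5) + (-3) * omega)"])
  apply simp
  apply (simp_all only: a3_def herm_vec vector_3 cnjs)
  apply ((simp add: field_simps; fail) | (use omega_sq in algebra) | algebra | (simp add: field_simps, use omega_sq in algebra))+
  done

lemma a_s14: "refl a4 (vector [((-5/3) + (7/4) * omega), ((-4/3) + (-35/12) * omega), ((-5/6) + (1/2) * omega)]) = vector [((0) + (5137/288) * omega), ((-135/8) + (-575/96) * omega), ((-1265/112) + (-7085/1008) * omega)]"
  apply (rule refl_step[OF a4_n, where h="((-607/2) + (-11/2) * omega)"])
  apply simp
  apply (simp_all only: a4_def herm_vec vector_3 cnjs)
  apply ((simp add: field_simps; fail) | (use omega_sq in algebra) | algebra | (simp add: field_simps, use omega_sq in algebra))+
  done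

lemma a_s15: "refl a5 (vector [((0) + (5137/288) * omega), ((-135/8) + (-575/96) * omega), ((-1265/112) + (-7085/1008) * omega)]) = vector [((0) + (1) * omega), ((0) + (0) * omega), ((0) + (0) * omega)]"
  apply (rule refl_step[OF a5_n, where h="((-335) + (5) * omega)"])
  apply simp
  apply (simp_all only: a5_def herm_vec vector_3 cnjs)
  apply ((simp add: field_simps; fail) | (use omega_sq in algebra) | algebra | (simp add: field_simps, use omega_sq in algebra))+
  done

lemma a_s21: "refl a1 (vector [0, 1, 0]) = vector [((3/4) + (0) * omega), ((5/4) + (0) * omega), ((0) + (0) * omega)]"
  apply (rule refl_step[OF a1_n, where h="((3) + (0) * omega)"])
  apply simp
  apply (simp_all only: a1_def herm_vec vector_3 cnjs)
  apply ((simp add: field_simps; fail) | (use omega_sq in algebra) | algebra | (simp add: field_simps, use omega_sq in algebra))+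
  done

lemma a_s22: "refl a2 (vector [((3/4) + (0) * omega), ((5/4) + (0) * omega), ((0) + (0) * omega)]) = vector [((3/4) + (0) * omega), ((-5/4) + (0) * omega), ((0) + (0) * omega)]"
  apply (rule refl_step[OF a2_n, where h="((-3/4) + (0) * omega)"])
  apply simp
  apply (simp_all only: a2_def herm_vec vector_3 cnjs)
  apply ((simp add: field_simps; fail) | (use omega_sq in algebra) | algebra | (simp add: field_simps, use omega_sq in algebra))+
  done

lemma a_s23: "refl a3 (vector [((3/4) + (0) * omega), ((-5/4) + (0) * omega), ((0) + (0) * omega)]) = vector [((-4/3) + (-35/12) * omega), ((3) + (7/4) * omega), ((-1/6) + (-5/6) * omega)]"
  apply (rule refl_step[OF a3_n, where h="((1) + (5) * omega)"])
  apply simp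
  apply (simp_all only: a3_def herm_vec vector_3 cnjs)
  apply ((simp add: field_simps; fail) | (use omega_sq in algebra) | algebra | (simp add: field_simps, use omega_sq in algebra))+
  done

lemma a_s24: "refl a4 (vector [((-4/3) + (-35/12) * omega), ((3) + (7/4) * omega), ((-1/6) + (-5/6) * omega)]) = vector [((-135/8) + (-1045/96) * omega), ((0) + (-405/32) * omega), ((303/112) + (-2035/336) * omega)]"
  apply (rule refl_step[OF a4_n, where h="((-159/2) + (-543/2) * omega)"])
  apply simp
  apply (simp_all only: a4_def herm_vec vector_3 cnjs)
  apply ((simp add: field_simps; fail) | (use omega_sq in algebra) | algebra | (simp add: field_simps, use omega_sq in algebra))+
  done

lemma a_s25: "refl a5 (vector [((-135/8) + (-1045/96) * omega), ((0) + (-405/32) * omega), ((303/112) + (-2035/336) * omega)]) = vector [((0) + (0) * omega), ((0) + (1) * omega), ((0) + (0) * omega)]"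
  apply (rule refl_step[OF a5_n, where h="((-111) + (-303) * omega)"])
  apply simp
  apply (simp_all only: a5_def herm_vec vector_3 cnjs)
  apply ((simp add: field_simps; fail) | (use omega_sq in algebra) | algebra | (simp add: field_simps, use omega_sq in algebra))+
  done

lemma a_s31: "refl a1 (vector [0, 0, 1]) = vector [((0) + (0) * omega), ((0) + (0) * omega), ((-1) + (0) * omega)]"
  apply (rule refl_step[OF a1_n, where h="((0) + (0) * omega)"])
  apply simp
  apply (simp_all only: a1_def herm_vec vector_3 cnjs)
  apply ((simp add: field_simps; fail) | (use omega_sq in algebra) | algebra | (simp add: field_simps, use omega_sq in algebra))+
  done

lemma a_s32: "refl a2 (vector [((0) + (0) * omega), ((0) + (0) * omega), ((-1) + (0) * omega)]) = vector [((0) + (0) * omega), ((0) + (0) * omega), ((1) + (0) * omega)]"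
  apply (rule refl_step[OF a2_n, where h="((0) + (0) * omega)"])
  apply simp
  apply (simp_all only: a2_def herm_vec vector_3 cnjs)
  apply ((simp add: field_simps; fail) | (use omega_sq in algebra) | algebra | (simp add: field_simps, use omega_sq in algebra))+
  done

lemma a_s33: "refl a3 (vector [((0) + (0) * omega), ((0) + (0) * omega), ((1) + (0) * omega)]) = vector [((-7/6) + (0) * omega), ((1/6) + (-2/3) * omega), ((-4/3) + (0) * omega)]"
  apply (rule refl_step[OF a3_n, where h="((2) + (0) * omega)"])
  apply simp
  apply (simp_all only: a3_def herm_vec vector_3 cnjs)
  apply ((simp add: field_simps; fail) | (use omega_sq in algebra) | algebra | (simp add: field_simps, use omega_sq in algebra))+
  done

lemma a_s34: "refl a4 (vector [((-7/6) + (0) * omega), ((1/6) + (-2/3) * omega), ((-4/3) + (0) * omega)]) = vector [((-1265/112) + (-1075/252) * omega), ((-303/112) + (-184/21) * omega), ((0) + (-445/72) * omega)]"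
  apply (rule refl_step[OF a4_n, where h="((-128) + (-181) * omega)"])
  apply simp
  apply (simp_all only: a4_def herm_vec vector_3 cnjs)
  apply ((simp add: field_simps; fail) | (use omega_sq in algebra) | algebra | (simp add: field_simps, use omega_sq in algebra))+
  done

lemma a_s35: "refl a5 (vector [((-1265/112) + (-1075/252) * omega), ((-303/112) + (-184/21) * omega), ((0) + (-445/72) * omega)]) = vector [((0) + (0) * omega), ((0) + (0) * omega), ((0) + (1) * omega)]"
  apply (rule refl_step[OF a5_n, where h="((-128) + (-202) * omega)"])
  apply simp
  apply (simp_all only: a5_def herm_vec vector_3 cnjs)
  apply ((simp add: field_simps; fail) | (use omega_sq in algebra) | algebra | (simp add: field_simps, use omega_sq in algebra))+
  done

definition b1 :: "complex^3" where "b1 = vector [((1) + (0) * omega), ((3) + (0) * omega), ((0) + (0) * omega)]"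

definition b2 :: "complex^3" where "b2 = vector [((1) + (0) * omega), ((0) + (0) * omega), ((0) + (0) * omega)]"

definition b3 :: "complex^3" where "b3 = vector [((7) + (0) * omega), ((-5) + (-4) * omega), ((2) + (0) * omega)]"

definition b4 :: "complex^3" where "b4 = vector [((-212) + (-199) * omega), ((-96) + (87) * omega), ((-58) + (64) * omega)]"

definition b5 :: "complex^3" where "b5 = vector [((-340) + (-335) * omega), ((-192) + (111) * omega), ((-74) + (128) * omega)]"

lemma b1_n: "herm b1 b1 = (8)"
  unfolding b1_def herm_vec by (simp only: cnjs) ((simp add: field_simps; fail) | (use omega_sq in algebra) | algebra | (simp add: field_simps, use omega_sq in algebra))

lemma b2_n: "herm b2 b2 = (-1)"
  unfolding b2_def herm_vec by (simp only: cnjs) ((simp add: field_simps; fail) | (use omega_sq in algebra) | algebra | (simp add: field_simps, use omega_sq in algebra))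

lemma b3_n: "herm b3 b3 = (-24)"
  unfolding b3_def herm_vec by (simp only: cnjs) ((simp add: field_simps; fail) | (use omega_sq in algebra) | algebra | (simp add: field_simps, use omega_sq in algebra))

lemma b4_n: "herm b4 b4 = (-6048)"
  unfolding b4_def herm_vec by (simp only: cnjs) ((simp add: field_simps; fail) | (use omega_sq in algebra) | algebra | (simp add: field_simps, use omega_sq in algebra))

lemma b5_n: "herm b5 b5 = (-12096)"
  unfolding b5_def herm_vec by (simp only: cnjs) ((simp add: field_simps; fail) | (use omega_sq in algebra) | algebra | (simp add: field_simps, use omega_sq in algebra))

lemma b12_h: "herm b1 b2 = ((-1) + (0) * omega)"
  unfolding b1_def b2_def herm_vec by (simp only: cnjs) ((simp add: field_simps; fail) | (use omega_sq in algebra) | algebra | (simp add: field_simps, use omega_sq in algebra))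

lemma b13_h: "herm b1 b3 = ((-10) + (12) * omega)"
  unfolding b1_def b3_def herm_vec by (simp only: cnjs) ((simp add: field_simps; fail) | (use omega_sq in algebra) | algebra | (simp add: field_simps, use omega_sq in algebra))

lemma b14_h: "herm b1 b4 = ((-536) + (-460) * omega)"
  unfolding b1_def b4_def herm_vec by (simp only: cnjs) ((simp add: field_simps; fail) | (use omega_sq in algebra) | algebra | (simp add: field_simps, use omega_sq in algebra))

lemma b15_h: "herm b1 b5 = ((-904) + (-668) * omega)"
  unfolding b1_def b5_def herm_vec by (simp only: cnjs) ((simp add: field_simps; fail) | (use omega_sq in algebra) | algebra | (simp add: field_simps, use omega_sq in algebra))

lemma b21_h: "herm b2 b1 = ((-1) + (0) * omega)"
  unfolding b2_def b1_def herm_vec by (simp only: cnjs) ((simp add: field_simps; fail) | (use omega_sq in algebra) | algebra | (simp add: field_simps, use omega_sq in algebra))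

lemma b23_h: "herm b2 b3 = ((-7) + (0) * omega)"
  unfolding b2_def b3_def herm_vec by (simp only: cnjs) ((simp add: field_simps; fail) | (use omega_sq in algebra) | algebra | (simp add: field_simps, use omega_sq in algebra))

lemma b24_h: "herm b2 b4 = ((13) + (-199) * omega)"
  unfolding b2_def b4_def herm_vec by (simp only: cnjs) ((simp add: field_simps; fail) | (use omega_sq in algebra) | algebra | (simp add: field_simps, use omega_sq in algebra))

lemma b25_h: "herm b2 b5 = ((5) + (-335) * omega)"
  unfolding b2_def b5_def herm_vec by (simp only: cnjs) ((simp add: field_simps; fail) | (use omega_sq in algebra) | algebra | (simp add: field_simps, use omega_sq in algebra))

lemma b31_h: "herm b3 b1 = ((-22) + (-12) * omega)"
  unfolding b3_def b1_def herm_vec by (simp only: cnjs) ((simp add: field_simps; fail) | (use omega_sq in algebra) | algebra | (simp add: field_simps, use omega_sq in algebra))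

lemma b32_h: "herm b3 b2 = ((-7) + (0) * omega)"
  unfolding b3_def b2_def herm_vec by (simp only: cnjs) ((simp add: field_simps; fail) | (use omega_sq in algebra) | algebra | (simp add: field_simps, use omega_sq in algebra))

lemma b34_h: "herm b3 b4 = ((414) + (-702) * omega)"
  unfolding b3_def b4_def herm_vec by (simp only: cnjs) ((simp add: field_simps; fail) | (use omega_sq in algebra) | algebra | (simp add: field_simps, use omega_sq in algebra))

lemma b35_h: "herm b3 b5 = ((702) + (-1278) * omega)"
  unfolding b3_def b5_def herm_vec by (simp only: cnjs) ((simp add: field_simps; fail) | (use omega_sq in algebra) | algebra | (simp add: field_simps, use omega_sq in algebra))

lemma b41_h: "herm b4 b1 = ((-76) + (460) * omega)"
  unfolding b4_def b1_def herm_vec by (simp only: cnjs) ((simp add: field_simps; fail) | (use omega_sq in algebra) | algebra | (simp add: field_simps, use omega_sq in algebra))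

lemma b42_h: "herm b4 b2 = ((212) + (199) * omega)"
  unfolding b4_def b2_def herm_vec by (simp only: cnjs) ((simp add: field_simps; fail) | (use omega_sq in algebra) | algebra | (simp add: field_simps, use omega_sq in algebra))

lemma b43_h: "herm b4 b3 = ((1116) + (702) * omega)"
  unfolding b4_def b3_def herm_vec by (simp only: cnjs) ((simp add: field_simps; fail) | (use omega_sq in algebra) | algebra | (simp add: field_simps, use omega_sq in algebra))

lemma b45_h: "herm b4 b5 = ((-9072) + (0) * omega)"
  unfolding b4_def b5_def herm_vec by (simp only: cnjs) ((simp add: field_simps; fail) | (use omega_sq in algebra) | algebra | (simp add: field_simps, use omega_sq in algebra))

lemma b51_h: "herm b5 b1 = ((-236) + (668) * omega)"
  unfolding b5_def b1_def herm_vec by (simp only: cnjs) ((simp add: field_simps; fail) | (use omega_sq in algebra) | algebra | (simp add: field_simps, use omega_sq in algebra))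

lemma b52_h: "herm b5 b2 = ((340) + (335) * omega)"
  unfolding b5_def b2_def herm_vec by (simp only: cnjs) ((simp add: field_simps; fail) | (use omega_sq in algebra) | algebra | (simp add: field_simps, use omega_sq in algebra))

lemma b53_h: "herm b5 b3 = ((1980) + (1278) * omega)"
  unfolding b5_def b3_def herm_vec by (simp only: cnjs) ((simp add: field_simps; fail) | (use omega_sq in algebra) | algebra | (simp add: field_simps, use omega_sq in algebra))

lemma b54_h: "herm b5 b4 = ((-9072) + (0) * omega)"
  unfolding b5_def b4_def herm_vec by (simp only: cnjs) ((simp add: field_simps; fail) | (use omega_sq in algebra) | algebra | (simp add: field_simps, use omega_sq in algebra))

lemma b12_t: "ta b1 b2 = (-1/8)"
  unfolding ta_def b12_h b21_h b1_n b2_n by ((simp add: field_simps; fail) | (use omega_sq in algebra) | algebra | (simp add: field_simps, use omega_sq in algebra))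

lemma b13_t: "ta b1 b3 = (-91/48)"
  unfolding ta_def b13_h b31_h b1_n b3_n by ((simp add: field_simps; fail) | (use omega_sq in algebra) | algebra | (simp add: field_simps, use omega_sq in algebra))

lemma b14_t: "ta b1 b4 = (-751/144)"
  unfolding ta_def b14_h b41_h b1_n b4_n by ((simp add: field_simps; fail) | (use omega_sq in algebra) | algebra | (simp add: field_simps, use omega_sq in algebra))

lemma b15_t: "ta b1 b5 = (-1963/288)"
  unfolding ta_def b15_h b51_h b1_n b5_n by ((simp add: field_simps; fail) | (use omega_sq in algebra) | algebra | (simp add: field_simps, use omega_sq in algebra))

lemma b21_t: "ta b2 b1 = (-1/8)"
  unfolding ta_def b21_h b12_h b2_n b1_n by ((simp add: field_simps; fail) | (use omega_sq in algebra) | algebra | (simp add: field_simps, use omega_sq in algebra))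

lemma b23_t: "ta b2 b3 = (49/24)"
  unfolding ta_def b23_h b32_h b2_n b3_n by ((simp add: field_simps; fail) | (use omega_sq in algebra) | algebra | (simp add: field_simps, use omega_sq in algebra))

lemma b24_t: "ta b2 b4 = (2017/288)"
  unfolding ta_def b24_h b42_h b2_n b4_n by ((simp add: field_simps; fail) | (use omega_sq in algebra) | algebra | (simp add: field_simps, use omega_sq in algebra))

lemma b25_t: "ta b2 b5 = (5425/576)"
  unfolding ta_def b25_h b52_h b2_n b5_n by ((simp add: field_simps; fail) | (use omega_sq in algebra) | algebra | (simp add: field_simps, use omega_sq in algebra))

lemma b31_t: "ta b3 b1 = (-91/48)"
  unfolding ta_def b31_h b13_h b3_n b1_n by ((simp add: field_simps; fail) | (use omega_sq in algebra) | algebra | (simp add: field_simps, use omega_sq in algebra))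

lemma b32_t: "ta b3 b2 = (49/24)"
  unfolding ta_def b32_h b23_h b3_n b2_n by ((simp add: field_simps; fail) | (use omega_sq in algebra) | algebra | (simp add: field_simps, use omega_sq in algebra))

lemma b34_t: "ta b3 b4 = (421/64)"
  unfolding ta_def b34_h b43_h b3_n b4_n by ((simp add: field_simps; fail) | (use omega_sq in algebra) | algebra | (simp add: field_simps, use omega_sq in algebra))

lemma b35_t: "ta b3 b5 = (1333/128)"
  unfolding ta_def b35_h b53_h b3_n b5_n by ((simp add: field_simps; fail) | (use omega_sq in algebra) | algebra | (simp add: field_simps, use omega_sq in algebra))

lemma b41_t: "ta b4 b1 = (-751/144)"
  unfolding ta_def b41_h b14_h b4_n b1_n by ((simp add: field_simps; fail) | (use omega_sq in algebra) | algebra | (simp add: field_simps, use omega_sq in algebra))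

lemma b42_t: "ta b4 b2 = (2017/288)"
  unfolding ta_def b42_h b24_h b4_n b2_n by ((simp add: field_simps; fail) | (use omega_sq in algebra) | algebra | (simp add: field_simps, use omega_sq in algebra))

lemma b43_t: "ta b4 b3 = (421/64)"
  unfolding ta_def b43_h b34_h b4_n b3_n by ((simp add: field_simps; fail) | (use omega_sq in algebra) | algebra | (simp add: field_simps, use omega_sq in algebra))

lemma b45_t: "ta b4 b5 = (9/8)"
  unfolding ta_def b45_h b54_h b4_n b5_n by ((simp add: field_simps; fail) | (use omega_sq in algebra) | algebra | (simp add: field_simps, use omega_sq in algebra))

lemma b51_t: "ta b5 b1 = (-1963/288)"
  unfolding ta_def b51_h b15_h b5_n b1_n by ((simp add: field_simps; fail) | (use omega_sq in algebra) | algebra | (simp add: field_simps, use omega_sq in algebra))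

lemma b52_t: "ta b5 b2 = (5425/576)"
  unfolding ta_def b52_h b25_h b5_n b2_n by ((simp add: field_simps; fail) | (use omega_sq in algebra) | algebra | (simp add: field_simps, use omega_sq in algebra))

lemma b53_t: "ta b5 b3 = (1333/128)"
  unfolding ta_def b53_h b35_h b5_n b3_n by ((simp add: field_simps; fail) | (use omega_sq in algebra) | algebra | (simp add: field_simps, use omega_sq in algebra))

lemma b54_t: "ta b5 b4 = (9/8)"
  unfolding ta_def b54_h b45_h b5_n b4_n by ((simp add: field_simps; fail) | (use omega_sq in algebra) | algebra | (simp add: field_simps, use omega_sq in algebra))

lemma b_s11: "refl b1 (vector [1, 0, 0]) = vector [((-5/4) + (0) * omega), ((-3/4) + (0) * omega), ((0) + (0) * omega)]"
  apply (rule refl_step[OF b1_n, where h="((-1) + (0) * omega)"])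
  apply simp
  apply (simp_all only: b1_def herm_vec vector_3 cnjs)
  apply ((simp add: field_simps; fail) | (use omega_sq in algebra) | algebra | (simp add: field_simps, use omega_sq in algebra))+
  done

lemma b_s12: "refl b2 (vector [((-5/4) + (0) * omega), ((-3/4) + (0) * omega), ((0) + (0) * omega)]) = vector [((-5/4) + (0) * omega), ((3/4) + (0) * omega), ((0) + (0) * omega)]"
  apply (rule refl_step[OF b2_n, where h="((5/4) + (0) * omega)"])
  apply simp
  apply (simp_all only: b2_def herm_vec vector_3 cnjs)
  apply ((simp add: field_simps; fail) | (use omega_sq in algebra) | algebra | (simp add: field_simps, use omega_sq in algebra))+
  done

lemma b_s13: "refl b3 (vector [((-5/4) + (0) * omega), ((3/4) + (0) * omega), ((0) + (0) * omega)]) = vector [((-41/12) + (-7/4) * omega), ((19/12) + (35/12) * omega), ((-4/3) + (-1/2) * omega)]"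
  apply (rule refl_step[OF b3_n, where h="((8) + (3) * omega)"])
  apply simp
  apply (simp_all only: b3_def herm_vec vector_3 cnjs)
  apply ((simp add: field_simps; fail) | (use omega_sq in algebra) | algebra | (simp add: field_simps, use omega_sq in algebra))+
  done

lemma b_s14: "refl b4 (vector [((-41/12) + (-7/4) * omega), ((19/12) + (35/12) * omega), ((-4/3) + (-1/2) * omega)]) = vector [((-5137/288) + (-5137/288) * omega), ((-1045/96) + (575/96) * omega), ((-1075/252) + (7085/1008) * omega)]"
  apply (rule refl_step[OF b4_n, where h="((-298) + (11/2) * omega)"])
  apply simp
  apply (simp_all only: b4_def herm_vec vector_3 cnjs)
  apply ((simp add: field_simps; fail) | (use omega_sq in algebra) | algebra | (simp add: field_simps, use omega_sq in algebra))+
  done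

lemma b_s15: "refl b5 (vector [((-5137/288) + (-5137/288) * omega), ((-1045/96) + (575/96) * omega), ((-1075/252) + (7085/1008) * omega)]) = vector [((-1) + (-1) * omega), ((0) + (0) * omega), ((0) + (0) * omega)]"
  apply (rule refl_step[OF b5_n, where h="((-340) + (-5) * omega)"])
  apply simp
  apply (simp_all only: b5_def herm_vec vector_3 cnjs)
  apply ((simp add: field_simps; fail) | (use omega_sq in algebra) | algebra | (simp add: field_simps, use omega_sq in algebra))+
  done

lemma b_s21: "refl b1 (vector [0, 1, 0]) = vector [((3/4) + (0) * omega), ((5/4) + (0) * omega), ((0) + (0) * omega)]"
  apply (rule refl_step[OF b1_n, where h="((3) + (0) * omega)"])
  apply simp
  apply (simp_all only: b1_def herm_vec vector_3 cnjs)
  apply ((simp add: field_simps; fail) | (use omega_sq in algebra) | algebra | (simp add: field_simps, use omega_sq in algebra))+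
  done

lemma b_s22: "refl b2 (vector [((3/4) + (0) * omega), ((5/4) + (0) * omega), ((0) + (0) * omega)]) = vector [((3/4) + (0) * omega), ((-5/4) + (0) * omega), ((0) + (0) * omega)]"
  apply (rule refl_step[OF b2_n, where h="((-3/4) + (0) * omega)"])
  apply simp
  apply (simp_all only: b2_def herm_vec vector_3 cnjs)
  apply ((simp add: field_simps; fail) | (use omega_sq in algebra) | algebra | (simp add: field_simps, use omega_sq in algebra))+
  done

lemma b_s23: "refl b3 (vector [((3/4) + (0) * omega), ((-5/4) + (0) * omega), ((0) + (0) * omega)]) = vector [((19/12) + (35/12) * omega), ((5/4) + (-7/4) * omega), ((2/3) + (5/6) * omega)]"
  apply (rule refl_step[OF b3_n, where h="((-4) + (-5) * omega)"])
  apply simp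
  apply (simp_all only: b3_def herm_vec vector_3 cnjs)
  apply ((simp add: field_simps; fail) | (use omega_sq in algebra) | algebra | (simp add: field_simps, use omega_sq in algebra))+
  done

lemma b_s24: "refl b4 (vector [((19/12) + (35/12) * omega), ((5/4) + (-7/4) * omega), ((2/3) + (5/6) * omega)]) = vector [((-575/96) + (1045/96) * omega), ((405/32) + (405/32) * omega), ((184/21) + (2035/336) * omega)]"
  apply (rule refl_step[OF b4_n, where h="((192) + (543/2) * omega)"])
  apply simp
  apply (simp_all only: b4_def herm_vec vector_3 cnjs)
  apply ((simp add: field_simps; fail) | (use omega_sq in algebra) | algebra | (simp add: field_simps, use omega_sq in algebra))+
  done

lemma b_s25: "refl b5 (vector [((-575/96) + (1045/96) * omega), ((405/32) + (405/32) * omega), ((184/21) + (2035/336) * omega)]) = vector [((0) + (0) * omega), ((-1) + (-1) * omega), ((0) + (0) * omega)]"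
  apply (rule refl_step[OF b5_n, where h="((192) + (303) * omega)"])
  apply simp
  apply (simp_all only: b5_def herm_vec vector_3 cnjs)
  apply ((simp add: field_simps; fail) | (use omega_sq in algebra) | algebra | (simp add: field_simps, use omega_sq in algebra))+
  done

lemma b_s31: "refl b1 (vector [0, 0, 1]) = vector [((0) + (0) * omega), ((0) + (0) * omega), ((-1) + (0) * omega)]"
  apply (rule refl_step[OF b1_n, where h="((0) + (0) * omega)"])
  apply simp
  apply (simp_all only: b1_def herm_vec vector_3 cnjs)
  apply ((simp add: field_simps; fail) | (use omega_sq in algebra) | algebra | (simp add: field_simps, use omega_sq in algebra))+
  done

lemma b_s32: "refl b2 (vector [((0) + (0) * omega), ((0) + (0) * omega), ((-1) + (0) * omega)]) = vector [((0) + (0) * omega), ((0) + (0) * omega), ((1) + (0) * omega)]"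
  apply (rule refl_step[OF b2_n, where h="((0) + (0) * omega)"])
  apply simp
  apply (simp_all only: b2_def herm_vec vector_3 cnjs)
  apply ((simp add: field_simps; fail) | (use omega_sq in algebra) | algebra | (simp add: field_simps, use omega_sq in algebra))+
  done

lemma b_s33: "refl b3 (vector [((0) + (0) * omega), ((0) + (0) * omega), ((1) + (0) * omega)]) = vector [((-7/6) + (0) * omega), ((5/6) + (2/3) * omega), ((-4/3) + (0) * omega)]"
  apply (rule refl_step[OF b3_n, where h="((2) + (0) * omega)"])
  apply simp
  apply (simp_all only: b3_def herm_vec vector_3 cnjs)
  apply ((simp add: field_simps; fail) | (use omega_sq in algebra) | algebra | (simp add: field_simps, use omega_sq in algebra))+
  done

lemma b_s34: "refl b4 (vector [((-7/6) + (0) * omega), ((5/6) + (2/3) * omega), ((-4/3) + (0) * omega)]) = vector [((-7085/1008) + (1075/252) * omega), ((2035/336) + (184/21) * omega), ((445/72) + (445/72) * omega)]"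
  apply (rule refl_step[OF b4_n, where h="((53) + (181) * omega)"])
  apply simp
  apply (simp_all only: b4_def herm_vec vector_3 cnjs)
  apply ((simp add: field_simps; fail) | (use omega_sq in algebra) | algebra | (simp add: field_simps, use omega_sq in algebra))+
  done

lemma b_s35: "refl b5 (vector [((-7085/1008) + (1075/252) * omega), ((2035/336) + (184/21) * omega), ((445/72) + (445/72) * omega)]) = vector [((0) + (0) * omega), ((0) + (0) * omega), ((-1) + (-1) * omega)]"
  apply (rule refl_step[OF b5_n, where h="((74) + (202) * omega)"])
  apply simp
  apply (simp_all only: b5_def herm_vec vector_3 cnjs)
  apply ((simp add: field_simps; fail) | (use omega_sq in algebra) | algebra | (simp add: field_simps, use omega_sq in algebra))+
  done
lemma lin3: "x = x$1 *s vector [1, 0, 0] + x$2 *s vector [0, 1, 0] + x$3 *s (vector [0, 0, 1] :: complex^3)"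
  by (simp add: vec_eq_iff forall_3)


lemma compA: "refl a5 \<circ> refl a4 \<circ> refl a3 \<circ> refl a2 \<circ> refl a1 = (\<lambda>x. omega *s x)"
proof (rule ext)
  fix x :: "complex^3"
  let ?F = "refl a5 \<circ> refl a4 \<circ> refl a3 \<circ> refl a2 \<circ> refl a1"
  have "?F (x$1 *s vector [1, 0, 0] + x$2 *s vector [0, 1, 0] + x$3 *s vector [0, 0, 1]) =
     x$1 *s ?F (vector [1, 0, 0]) + x$2 *s ?F (vector [0, 1, 0]) + x$3 *s ?F (vector [0, 0, 1])"
    by (simp add: refl_add refl_scale)
  also have "\<dots> = omega *s x"
    by (simp only: o_def a_s11 a_s12 a_s13 a_s14 a_s15 a_s21 a_s22 a_s23 a_s24 a_s25 a_s31 a_s32 a_s33 a_s34 a_s35)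
       (simp add: vec_eq_iff forall_3)
  finally show "?F x = omega *s x" using lin3[of x] by metis
qed

lemma compB: "refl b5 \<circ> refl b4 \<circ> refl b3 \<circ> refl b2 \<circ> refl b1 = (\<lambda>x. omega^2 *s x)"
proof (rule ext)
  fix x :: "complex^3"
  let ?F = "refl b5 \<circ> refl b4 \<circ> refl b3 \<circ> refl b2 \<circ> refl b1"
  have "?F (x$1 *s vector [1, 0, 0] + x$2 *s vector [0, 1, 0] + x$3 *s vector [0, 0, 1]) =
     x$1 *s ?F (vector [1, 0, 0]) + x$2 *s ?F (vector [0, 1, 0]) + x$3 *s ?F (vector [0, 0, 1])"
    by (simp add: refl_add refl_scale)
  also have "\<dots> = omega^2 *s x"
    by (simp only: o_def b_s11 b_s12 b_s13 b_s14 b_s15 b_s21 b_s22 b_s23 b_s24 b_s25 b_s31 b_s32 b_s33 b_s34 b_s35)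
       (simp add: vec_eq_iff forall_3 omega_sq algebra_simps)
  finally show "?F x = omega^2 *s x" using lin3[of x] by metis
qed

lemma set15: "{1..5::nat} = {1,2,3,4,5}" by auto

lemma exA: "PH5 (\<lambda>i. if i = 1 then 1 else -1) omega \<noteq> {}"
proof -
  define p where "p = (\<lambda>i::nat. if i = 1 then a1 else if i = 2 then a2 else if i = 3 then a3 else if i = 4 then a4 else a5)"
  define rho where "rho = (\<lambda>i::nat. if i \<in> {1..5} then refl (p i) else id)"
  have "rho \<in> PH5 (\<lambda>i. if i = 1 then 1 else -1) omega"
    unfolding PH5_def mem_Collect_eq set15
    apply (rule exI[of _ p])
    apply (simp add: set15 rho_def p_def nonisotropic_def sigma_pt_def compA
       a1_n a2_n a3_n a4_n a5_n a12_t a13_t a14_t a15_t a21_t a23_t a24_t a25_t a31_t a32_t a34_t a35_t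
       a41_t a42_t a43_t a45_t a51_t a52_t a53_t a54_t)
    apply (auto simp: complex_eq_iff)
    done
  then show ?thesis by auto
qed

lemma exB: "PH5 (\<lambda>i. if i = 1 then 1 else -1) (omega^2) \<noteq> {}"
proof -
  define p where "p = (\<lambda>i::nat. if i = 1 then b1 else if i = 2 then b2 else if i = 3 then b3 else if i = 4 then b4 else b5)"
  define rho where "rho = (\<lambda>i::nat. if i \<in> {1..5} then refl (p i) else id)"
  have "rho \<in> PH5 (\<lambda>i. if i = 1 then 1 else -1) (omega^2)"
    unfolding PH5_def mem_Collect_eq set15
    apply (rule exI[of _ p])
    apply (simp add: set15 rho_def p_def nonisotropic_def sigma_pt_def compB
       b1_n b2_n b3_n b4_n b5_n b12_t b13_t b14_t b15_t b21_t b23_t b24_t b25_t b31_t b32_t b34_t b35_t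
       b41_t b42_t b43_t b45_t b51_t b52_t b53_t b54_t)
    apply (auto simp: complex_eq_iff)
    done
  then show ?thesis by auto
qed

lemma noA: "PH5 (\<lambda>i. if i = 1 then 1 else -1) 1 = {}"
proof (rule ccontr)
  assume "PH5 (\<lambda>i. if i = 1 then 1 else -1) 1 \<noteq> {}"
  then obtain rho where "rho \<in> PH5 (\<lambda>i. if i = 1 then 1 else -1) 1" by auto
  then obtain p where
    P: "\<forall>i\<in>{1..5}. nonisotropic (p i) \<and> sigma_pt (p i) = (if i = 1 then 1 else -1) \<and> rho i = refl (p i)"
    and T: "\<forall>i\<in>{1..5}. \<forall>j\<in>{1..5}. i \<noteq> j \<longrightarrow> ta (p i) (p j) \<noteq> 0 \<and> ta (p i) (p j) \<noteq> 1"
    and C: "refl (p 5) \<circ> refl (p 4) \<circ> refl (p 3) \<circ> refl (p 2) \<circ> refl (p 1) = (\<lambda>x. 1 *s x)"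
    unfolding PH5_def by blast
  have n1: "herm (p 1) (p 1) \<noteq> 0" using P by (auto simp: nonisotropic_def)
  have s1: "\<not> Re (herm (p 1) (p 1)) < 0" using P by (force simp: sigma_pt_def)
  have sn: "Re (herm (p i) (p i)) < 0" if "i \<in> {2,3,4,5}" for i
  proof -
    have "sigma_pt (p i) = -1" using P that by auto
    then show ?thesis by (auto simp: sigma_pt_def split: if_splits)
  qed
  have "ta (p 1) (p 2) \<noteq> 0" using T by auto
  then have h12: "herm (p 1) (p 2) \<noteq> 0" by (auto simp: ta_def)
  show False
    by (rule no_delta1[OF n1 s1 sn sn sn sn h12 C]) auto
qed
theorem mainTheorem8:
  fixes Sig :: "nat \<Rightarrow> int"
  defines "Sig \<equiv> (\<lambda>i. if i = 1 then 1 else -1)"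
  shows "PH5 Sig 1 = {} \<and> PH5 Sig omega \<noteq> {} \<and> PH5 Sig (omega^2) \<noteq> {}"
  unfolding Sig_def using noA exA exB by blast

end
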